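(* Let $L,p,q$ be positive integers with $p\ge 2$ and $p+q\le L$. For any $\varepsilon>0$ there exists a $(p,q)$-cliff sequence $\mathbf{l}\in\mathbb{R}^L$ (of some norm $C>0$) such that $\mathrm{softmax}(\mathbf{l})_i\le\varepsilon$ for every $i\in[1,p-1]\cup[p+q+1,L]$.
   Context: A sequence $\mathbf{l}=(\mathbf{l}_1,\dots,\mathbf{l}_L)\in\mathbb{R}^L$ is called a $(p,q)$-cliff sequence if: (1) (increasing segment) $\mathbf{l}_{i+1}>\mathbf{l}_i$ for all $i<p$; (2) (plateau) $\frac{\mathbf{l}_{p-1}+\mathbf{l}_p}{2}\le\mathbf{l}_j\le\mathbf{l}_p$ for all $j\in\{p+1,\dots,p+q\}$; (3) (descending segment) $\mathbf{l}_i<\mathbf{l}_1$ for all $p+q<i\le L$. Here $\mathrm{softmax}(\mathbf{l})_i=e^{\mathbf{l}_i}/\sum_{k=1}^L e^{\mathbf{l}_k}$. *)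

theory Defs
  imports Complex_Main
begin

text \<open>Sequences l = (l_1,...,l_L) in R^L are represented as functions nat => real,
  only the values at indices 1..L being relevant.\<close>

definition cliff_seq :: "nat \<Rightarrow> nat \<Rightarrow> nat \<Rightarrow> (nat \<Rightarrow> real) \<Rightarrow> bool" where
  "cliff_seq L p q l \<longleftrightarrow>
     (\<forall>i. 1 \<le> i \<and> i < p \<longrightarrow> l (i + 1) > l i) \<and>
     (\<forall>j\<in>{p+1..p+q}. (l (p - 1) + l p) / 2 \<le> l j \<and> l j \<le> l p) \<and>
     (\<forall>i. p + q < i \<and> i \<le> L \<longrightarrow> l i < l 1)"

definition softmax :: "nat \<Rightarrow> (nat \<Rightarrow> real) \<Rightarrow> nat \<Rightarrow> real" where
  "softmax L l i = exp (l i) / (\<Sum>k=1..L. exp (l k))"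

definition seq_norm :: "nat \<Rightarrow> (nat \<Rightarrow> real) \<Rightarrow> real" where
  "seq_norm L l = sqrt (\<Sum>k=1..L. (l k)\<^sup>2)"

end

theory Submission
  imports Defs
begin

theorem lemmaE5:
  fixes L p q :: nat and \<epsilon> :: real
  assumes "L > 0" "p \<ge> 2" "q > 0" "p + q \<le> L" "\<epsilon> > 0"
  shows "\<exists>l :: nat \<Rightarrow> real. cliff_seq L p q l \<and> seq_norm L l > 0 \<and>
           (\<forall>i \<in> {1..p-1} \<union> {p+q+1..L}. softmax L l i \<le> \<epsilon>)"
proof -
  define M :: real where "M = 1 + \<bar>ln \<epsilon>\<bar>"
  have M0: "M > 0" unfolding M_def by simp
  have eM: "exp (- M) \<le> \<epsilon>"
  proof -
    have "- M \<le> ln \<epsilon>" unfolding M_def by simp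
    hence "exp (- M) \<le> exp (ln \<epsilon>)" by simp
    thus ?thesis using assms(5) by simp
  qed
  define l :: "nat \<Rightarrow> real" where
    "l i = (if i \<le> p then M * real i else if i \<le> p + q then M * real p else 0)" for i
  have pL: "p \<in> {1..L}" using assms by auto
  have cl: "cliff_seq L p q l"
    unfolding cliff_seq_def
  proof (intro conjI allI impI ballI)
    fix i assume "1 \<le> i \<and> i < p"
    thus "l (i+1) > l i" using M0 by (auto simp: l_def)
  next
    fix j assume j: "j \<in> {p+1..p+q}"
    have "l (p-1) = M * real (p-1)" "l p = M * real p" "l j = M * real p"
      using j assms(2) by (auto simp: l_def)
    moreover have "real (p-1) = real p - 1" using assms(2) by simp
    ultimately show "(l (p - 1) + l p) / 2 \<le> l j" "l j \<le> l p" using M0 by auto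
  next
    fix i assume "p + q < i \<and> i \<le> L"
    thus "l i < l 1" using M0 assms(2) by (auto simp: l_def)
  qed
  have nrm: "seq_norm L l > 0"
  proof -
    have "0 < (l p)\<^sup>2" using M0 assms(2) by (simp add: l_def)
    also have "\<dots> \<le> (\<Sum>k=1..L. (l k)\<^sup>2)"
      using pL by (intro member_le_sum) auto
    finally show ?thesis unfolding seq_norm_def by simp
  qed
  have S: "exp (M * real p) \<le> (\<Sum>k=1..L. exp (l k))"
  proof -
    have "exp (l p) \<le> (\<Sum>k=1..L. exp (l k))"
      using pL by (intro member_le_sum) auto
    thus ?thesis by (simp add: l_def)
  qed
  have "softmax L l i \<le> \<epsilon>" if i: "i \<in> {1..p-1} \<union> {p+q+1..L}" for i
  proof -
    have li: "l i \<le> M * real p - M"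
    proof (cases "i \<le> p - 1")
      case True
      hence "real i \<le> real p - 1" using assms(2) by linarith
      hence "M * real i \<le> M * (real p - 1)" using M0 by (intro mult_left_mono) auto
      moreover have "i \<le> p" using True by simp
      ultimately show ?thesis by (simp add: l_def algebra_simps)
    next
      case False
      hence "l i = 0" using i by (auto simp: l_def)
      moreover have "M * 1 \<le> M * real p" using M0 assms(2) by (intro mult_left_mono) auto
      ultimately show ?thesis by simp
    qed
    have pos: "0 < exp (M * real p)" by simp
    have "softmax L l i = exp (l i) / (\<Sum>k=1..L. exp (l k))" by (simp add: softmax_def)
    also have "\<dots> \<le> exp (l i) / exp (M * real p)"
      using S pos less_le_trans[OF pos S] by (intro divide_left_mono) auto
    also have "\<dots> = exp (l i - M * real p)" by (simp add: exp_diff)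
    also have "\<dots> \<le> exp (- M)" using li by simp
    also have "\<dots> \<le> \<epsilon>" by (rule eM)
    finally show ?thesis .
  qed
  thus ?thesis using cl nrm by blast
qed

end
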